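(* For $p\in(0,1)$ let $X_p$ be a geometric random variable with $P\{X_p=k\}=p(1-p)^k$, $k=0,1,2,\dots$. Then $$\inf_{p\in(0,1)}P\left\{|X_p-E[X_p]|\le\sqrt{\mathrm{Var}(X_p)}\right\}=\inf_{p\in(0,1)}P\left\{|X_p-E[X_p]|<\sqrt{\mathrm{Var}(X_p)}\right\}=\frac34.$$ *)

theory Defs
  imports "HOL-Probability.Probability"
begin

end

theory Submission imports Defs begin

lemma sums_n2:
  fixes z :: real assumes "\<bar>z\<bar> < 1"
  shows "(\<lambda>n. z^n * (real n)^2) sums (z*(1+z)/(1-z)^3)"
proof -
  have s: "(\<lambda>n. real n * w^n) sums (w/(1-w)^2)" if "norm w < 1" for w :: real
    using geometric_sums_times_n[OF that] by (simp add: mult.commute)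
  have d: "((\<lambda>w::real. w/(1-w)^2) has_field_derivative ((1+z)/(1-z)^3)) (at z)"
  proof -
    have nz: "1 - z \<noteq> 0" using assms by auto
    have "((\<lambda>w::real. w/(1-w)^2) has_field_derivative ((1 * (1-z)^2 - z * (2 * (1-z) * (-1))) / ((1-z)^2)^2)) (at z)"
      using nz by (auto intro!: derivative_eq_intros)
    moreover have "(1 * (1-z)^2 - z * (2 * (1-z) * (-1))) / ((1-z)^2)^2 = (1+z)/(1-z)^3"
    proof -
      have e1: "(1 * (1-z)^2 - z * (2 * (1-z) * (-1))) = (1+z)*(1-z)" by algebra
      have e2: "((1-z)^2)^2 = (1-z)^3*(1-z)" by algebra
      show ?thesis unfolding e1 e2 using nz by simp
    qed
    ultimately show ?thesis by simp
  qed
  have "(\<lambda>n. diffs (\<lambda>n. real n) n * z^n) sums ((1+z)/(1-z)^3)"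
    by (rule termdiffs_sums_strong[OF s d]) (use assms in auto)
  hence "(\<lambda>n. (real (Suc n))^2 * z^n) sums ((1+z)/(1-z)^3)"
    by (simp add: diffs_def power2_eq_square)
  hence "(\<lambda>n. z * ((real (Suc n))^2 * z^n)) sums (z * ((1+z)/(1-z)^3))"
    by (rule sums_mult)
  hence "(\<lambda>n. z^(Suc n) * (real (Suc n))^2) sums (z*(1+z)/(1-z)^3)"
    by (simp add: mult_ac)
  thus ?thesis by (subst (asm) sums_Suc_iff) simp
qed

lemma expectation_from_sums:
  fixes f :: "nat \<Rightarrow> real"
  assumes "\<And>n. f n \<ge> 0" "(\<lambda>n. pmf M n * f n) sums S"
  shows "measure_pmf.expectation M f = S"
proof -
  have "measure_pmf.expectation M f = (\<integral>n. pmf M n * f n \<partial>count_space UNIV)"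
    unfolding measure_pmf_eq_density by (subst integral_density) auto
  also have "integrable (count_space UNIV) (\<lambda>n. pmf M n * f n)"
    using assms unfolding integrable_count_space_nat_iff by (simp add: sums_iff)
  hence "(\<integral>n. pmf M n * f n \<partial>count_space UNIV) = S"
    using assms by (subst integral_count_space_nat) (simp_all add: sums_iff)
  finally show ?thesis .
qed

lemma variance_geometric:
  assumes "0 < p" "p < 1"
  shows "measure_pmf.variance (geometric_pmf p) real = (1-p)/p^2"
proof -
  have E: "measure_pmf.expectation (geometric_pmf p) real = (1-p)/p"
    using assms by (intro expectation_geometric_pmf) auto
  define q where "q = 1 - p"
  define m where "m = q/p"
  have q: "0 < q" "q < 1" using assms by (auto simp: q_def)
  have a: "(\<lambda>n. q^n * (real n)^2) sums (q*(1+q)/(1-q)^3)" using sums_n2[of q] q by simp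
  have b: "(\<lambda>n. q^n * real n) sums (q/(1-q)^2)"
    using geometric_sums_times_n[of q] q by (simp add: mult.commute)
  have c: "(\<lambda>n. q^n) sums (1/(1-q))" using geometric_sums[of q] q by simp
  have "(\<lambda>n. p * (q^n * (real n)^2) - (2*m*p) * (q^n * real n) + (p*m^2) * q^n) sums
        (p * (q*(1+q)/(1-q)^3) - (2*m*p) * (q/(1-q)^2) + (p*m^2) * (1/(1-q)))"
    by (intro sums_add sums_diff sums_mult a b c)
  moreover have "(p * (q*(1+q)/(1-q)^3) - (2*m*p) * (q/(1-q)^2) + (p*m^2) * (1/(1-q))) = q/p^2"
    using assms q by (simp add: m_def q_def field_simps power2_eq_square power3_eq_cube)
  ultimately have "(\<lambda>n. pmf (geometric_pmf p) n * (real n - (1-p)/p)^2) sums (q/p^2)"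
    using assms
    by (simp add: q_def[symmetric] m_def[symmetric] power2_eq_square algebra_simps)
  hence "measure_pmf.expectation (geometric_pmf p) (\<lambda>n. (real n - (1-p)/p)^2) = q/p^2"
    by (intro expectation_from_sums) auto
  thus ?thesis using E by (simp add: q_def)
qed

lemma key_bound:
  fixes q :: real and n :: nat
  assumes "0 < q" "q < 1" "real n \<ge> (q + sqrt q)/(1-q)"
  shows "q^n \<le> 1/4"
proof -
  define s where "s = sqrt q"
  have s: "0 < s" "s < 1" "q = s^2" using assms by (auto simp: s_def)
  have "(q + sqrt q) > 0" using assms by (simp add: add_pos_pos)
  hence "real n > 0" using assms(3) assms(2) by (smt (verit) divide_pos_pos)
  hence n1: "n \<ge> 1" by simp
  have "q + sqrt q \<le> real n * (1 - q)" using assms(3) assms(2) by (simp add: pos_divide_le_eq)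
  hence "real n * (1 - s^2) \<ge> s^2 + s" unfolding s_def using assms by simp
  hence "((real n + 1) * s - real n) * (s + 1) \<le> 0" by (simp add: algebra_simps power2_eq_square)
  hence "(real n + 1) * s - real n \<le> 0" using s
    by (simp add: mult_le_0_iff)
  hence sle: "s \<le> real n / (real n + 1)" by (simp add: field_simps)
  have bern: "1 + real n * (1 / real n) \<le> (1 + 1 / real n)^n"
  proof (rule Bernoulli_inequality)
    have "0 \<le> 1 / real n" by simp
    thus "-1 \<le> 1 / real n" by linarith
  qed
  hence "2 \<le> ((real n + 1) / real n)^n" using n1 by (simp add: field_simps)
  hence h: "(real n / (real n + 1))^n \<le> 1/2"
    using n1 by (simp add: power_divide field_simps)
  have "s^n \<le> (real n / (real n + 1))^n" using s sle by (intro power_mono) auto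
  hence "s^n \<le> 1/2" using h by linarith
  hence "(s^n)^2 \<le> (1/2)^2" using s by (intro power_mono) auto
  thus ?thesis using s by (simp add: power_mult[symmetric] power_mult_distrib mult.commute power2_eq_square flip: power_mult)
qed

lemma geom_cdf:
  assumes "0 < p" "p < 1"
  shows "measure_pmf.prob (geometric_pmf p) {..<n} = 1 - (1-p)^n"
proof -
  have "measure_pmf.prob (geometric_pmf p) {..<n} = (\<Sum>k<n. pmf (geometric_pmf p) k)"
    by (simp add: measure_measure_pmf_finite)
  also have "\<dots> = 1 - (1-p)^n"
    using assms by (induction n) (auto simp: algebra_simps)
  finally show ?thesis .
qed

lemma sets_eq:
  fixes m s :: real
  assumes "m - s < 0" "0 \<le> m + s"
  shows "{k::nat. \<bar>real k - m\<bar> \<le> s} = {..<nat \<lfloor>m+s\<rfloor> + 1}"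
    and "{k::nat. \<bar>real k - m\<bar> < s} = {..<nat \<lceil>m+s\<rceil>}"
proof -
  have f0: "\<lfloor>m+s\<rfloor> \<ge> 0" using assms by simp
  show "{k::nat. \<bar>real k - m\<bar> \<le> s} = {..<nat \<lfloor>m+s\<rfloor> + 1}"
  proof (intro set_eqI iffI)
    fix k assume "k \<in> {k::nat. \<bar>real k - m\<bar> \<le> s}"
    hence "real k \<le> m + s" by auto
    hence "int k \<le> \<lfloor>m+s\<rfloor>" by (simp add: le_floor_iff)
    thus "k \<in> {..<nat \<lfloor>m+s\<rfloor> + 1}" by auto
  next
    fix k assume "k \<in> {..<nat \<lfloor>m+s\<rfloor> + 1}"
    hence "k \<le> nat \<lfloor>m+s\<rfloor>" by simp
    hence "int k \<le> \<lfloor>m+s\<rfloor>" using f0 le_nat_iff by blast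
    hence "real k \<le> m + s" by (simp add: le_floor_iff)
    moreover have "real k \<ge> 0" by simp
    ultimately show "k \<in> {k::nat. \<bar>real k - m\<bar> \<le> s}" using assms by auto
  qed
  show "{k::nat. \<bar>real k - m\<bar> < s} = {..<nat \<lceil>m+s\<rceil>}"
  proof (intro set_eqI iffI)
    fix k assume "k \<in> {k::nat. \<bar>real k - m\<bar> < s}"
    hence "real k < m + s" by auto
    hence "int k < \<lceil>m+s\<rceil>" by (simp add: less_ceiling_iff)
    thus "k \<in> {..<nat \<lceil>m+s\<rceil>}" by auto
  next
    fix k assume "k \<in> {..<nat \<lceil>m+s\<rceil>}"
    hence "int k < \<lceil>m+s\<rceil>" by auto
    hence "real k < m + s" by (simp add: less_ceiling_iff)
    moreover have "real k \<ge> 0" by simp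
    ultimately show "k \<in> {k::nat. \<bar>real k - m\<bar> < s}" using assms by auto
  qed
qed

lemma probs:
  assumes "0 < p" "p < 1"
  defines "x \<equiv> ((1-p) + sqrt (1-p)) / p"
  shows "measure_pmf.prob (geometric_pmf p)
            {k. \<bar>real k - measure_pmf.expectation (geometric_pmf p) real\<bar>
                  \<le> sqrt (measure_pmf.variance (geometric_pmf p) real)} = 1 - (1-p)^(nat \<lfloor>x\<rfloor> + 1)"
    and "measure_pmf.prob (geometric_pmf p)
            {k. \<bar>real k - measure_pmf.expectation (geometric_pmf p) real\<bar>
                  < sqrt (measure_pmf.variance (geometric_pmf p) real)} = 1 - (1-p)^(nat \<lceil>x\<rceil>)"
proof -
  have E: "measure_pmf.expectation (geometric_pmf p) real = (1-p)/p"
    using assms by (intro expectation_geometric_pmf) auto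
  have V: "sqrt (measure_pmf.variance (geometric_pmf p) real) = sqrt (1-p) / p"
    using assms by (simp add: variance_geometric real_sqrt_divide)
  have q: "0 < 1 - p" "1 - p < 1" using assms by auto
  have "sqrt (1-p) > 1 - p"
  proof -
    have "sqrt (1-p) < 1" using q by simp
    moreover have "0 < sqrt (1-p)" using q by simp
    ultimately have "sqrt (1-p) * sqrt (1-p) < sqrt (1-p) * 1" by (rule mult_strict_left_mono)
    moreover have "sqrt (1-p) * sqrt (1-p) = 1 - p" using q by simp
    ultimately show ?thesis by linarith
  qed
  hence a1: "(1-p)/p - sqrt (1-p)/p < 0" using assms by (simp add: diff_divide_distrib[symmetric] divide_neg_pos)
  have a2: "0 \<le> (1-p)/p + sqrt (1-p)/p" using assms by simp
  have xe: "(1-p)/p + sqrt (1-p)/p = x" unfolding x_def by (simp add: add_divide_distrib)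
  show "measure_pmf.prob (geometric_pmf p)
            {k. \<bar>real k - measure_pmf.expectation (geometric_pmf p) real\<bar>
                  \<le> sqrt (measure_pmf.variance (geometric_pmf p) real)} = 1 - (1-p)^(nat \<lfloor>x\<rfloor> + 1)"
    unfolding V unfolding E sets_eq(1)[OF a1 a2] xe using geom_cdf assms by simp
  show "measure_pmf.prob (geometric_pmf p)
            {k. \<bar>real k - measure_pmf.expectation (geometric_pmf p) real\<bar>
                  < sqrt (measure_pmf.variance (geometric_pmf p) real)} = 1 - (1-p)^(nat \<lceil>x\<rceil>)"
    unfolding V unfolding E sets_eq(2)[OF a1 a2] xe using geom_cdf assms by simp
qed

lemma lower:
  assumes "0 < p" "p < 1" "real n \<ge> ((1-p) + sqrt (1-p)) / p"
  shows "3/4 \<le> 1 - (1-p)^n"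
proof -
  have "(1-p)^n \<le> 1/4" using key_bound[of "1-p" n] assms by simp
  thus ?thesis by simp
qed

theorem proposition3p1:
  shows "(INF p\<in>{0<..<1::real}. measure_pmf.prob (geometric_pmf p)
            {k. \<bar>real k - measure_pmf.expectation (geometric_pmf p) real\<bar>
                  \<le> sqrt (measure_pmf.variance (geometric_pmf p) real)}) = 3 / 4
       \<and> (INF p\<in>{0<..<1::real}. measure_pmf.prob (geometric_pmf p)
            {k. \<bar>real k - measure_pmf.expectation (geometric_pmf p) real\<bar>
                  < sqrt (measure_pmf.variance (geometric_pmf p) real)}) = 3 / 4"
    (is "(INF p\<in>?A. ?f p) = _ \<and> (INF p\<in>?A. ?g p) = _")
proof -
  define x where "x = (\<lambda>p::real. ((1-p) + sqrt (1-p)) / p)"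
  have x0: "x p \<ge> 0" if "0 < p" "p < 1" for p using that by (simp add: x_def)
  have f: "?f p = 1 - (1-p)^(nat \<lfloor>x p\<rfloor> + 1)" if "0 < p" "p < 1" for p
    using probs(1)[OF that] by (simp add: x_def)
  have g: "?g p = 1 - (1-p)^(nat \<lceil>x p\<rceil>)" if "0 < p" "p < 1" for p
    using probs(2)[OF that] by (simp add: x_def)
  have flow: "3/4 \<le> ?f p" if "p \<in> ?A" for p
  proof -
    have p: "0 < p" "p < 1" using that by auto
    have "real (nat \<lfloor>x p\<rfloor> + 1) \<ge> x p" using x0[OF p] by linarith
    thus ?thesis unfolding f[OF p] by (intro lower p) (simp add: x_def)
  qed
  have glow: "3/4 \<le> ?g p" if "p \<in> ?A" for p
  proof -
    have p: "0 < p" "p < 1" using that by auto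
    have "real (nat \<lceil>x p\<rceil>) \<ge> x p" using x0[OF p] by linarith
    thus ?thesis unfolding g[OF p] by (intro lower p) (simp add: x_def)
  qed
  have bf: "bdd_below (?f ` ?A)" using flow by (intro bdd_belowI2) 
  have bg: "bdd_below (?g ` ?A)" using glow by (intro bdd_belowI2)
  have ne: "?A \<noteq> {}" by auto
  have s4: "sqrt (1/4::real) = 1/2" by (rule real_sqrt_unique) (auto simp: power2_eq_square)
  have "x (3/4) = 1" unfolding x_def using s4 by simp
  hence "?g (3/4) = 3/4" using g[of "3/4"] by simp
  hence "(INF p\<in>?A. ?g p) \<le> 3/4" using cINF_lower[OF bg, of "3/4"] by simp
  moreover have "(INF p\<in>?A. ?g p) \<ge> 3/4" using glow by (intro cINF_greatest ne) auto
  ultimately have G: "(INF p\<in>?A. ?g p) = 3/4" by simp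
  have fp: "?f p = p" if "3/4 < p" "p < 1" for p
  proof -
    have p: "0 < p" "p < 1" using that by auto
    have "sqrt (1-p) < sqrt (1/4)" using that by (subst real_sqrt_less_iff) simp
    hence "sqrt (1-p) < 1/2" using s4 by simp
    hence "x p < 1" unfolding x_def using that by (simp add: divide_less_eq)
    hence "\<lfloor>x p\<rfloor> = 0" using x0[OF p] by (simp add: floor_eq_iff)
    thus ?thesis using f[OF p] by simp
  qed
  have "(INF p\<in>?A. ?f p) \<le> 3/4"
  proof (rule dense_ge_bounded[of "3/4" 1])
    show "(3/4::real) < 1" by simp
    fix w :: real assume "3/4 < w" "w < 1"
    hence "(INF p\<in>?A. ?f p) \<le> ?f w" by (intro cINF_lower[OF bf]) auto
    thus "(INF p\<in>?A. ?f p) \<le> w" using fp[of w] \<open>3/4 < w\<close> \<open>w < 1\<close> by simp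
  qed
  moreover have "(INF p\<in>?A. ?f p) \<ge> 3/4" using flow by (intro cINF_greatest ne) auto
  ultimately have F: "(INF p\<in>?A. ?f p) = 3/4" by simp
  show ?thesis using F G by simp
qed

end
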